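(* Let $\hat{\mathcal{C}}$ be a reference frame, $K$ an intrinsic matrix and $C$ a corner matrix with associated unit vectors $a_0,\dots,a_3$ (defined in the context), and let $\delta\ge 0$. Let $\tilde{\mathcal{C}}$ be the frame with the same orientation as $\hat{\mathcal{C}}$ (i.e. ${}^{\hat{\mathcal{C}}}R_{\tilde{\mathcal{C}}}=I$) and with ${}^{\hat{\mathcal{C}}}t_{\tilde{\mathcal{C}}}=[0\ 0\ \tilde z]^T$. If $$\tilde z\ \ge\ \frac{\delta}{\min_{i\in\{0,1,2,3\}} a_{i,z}},$$ then $\mathcal{V}_{\tilde{\mathcal{C}}}(K,C)\subseteq\mathcal{V}_{\mathcal{F}}(K,C)$ for every frame $\mathcal{F}\in\mathcal{P}(\delta,0)$.
   Context: A reference frame is an origin in $\mathbb{R}^3$ with an orthonormal basis. ${}^{\mathcal{F}}R_{\mathcal{G}}$ is the rotation matrix whose columns are the basis vectors of $\mathcal{G}$ expressed in $\mathcal{F}$; ${}^{\mathcal{F}}t_{\mathcal{G}}$ is the vector from the origin of $\mathcal{F}$ to that of $\mathcal{G}$ in $\mathcal{F}$-coordinates; ${}^{\mathcal{F}}y$ is the coordinate vector of a point $y$ in $\mathcal{F}$; $v_z$ is the third component of $v$. $K\in\mathbb{R}^{3\times3}$ is an invertible upper triangular intrinsic matrix, $C=[c_0\ c_1\ c_2\ c_3]\in\mathbb{R}^{2\times4}$ a matrix of image corner points. Define $d_i=K^{-1}[c_i^T\ 1]^T$, $l_i=\operatorname{sign}(d_{i,z})d_i/\|d_i\|_2$, $a_i=-\frac{l_i\times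 l_{(i+1)\bmod4}}{\|l_i\times l_{(i+1)\bmod4}\|_2}$. Field of view of a camera at frame $\mathcal{G}$: $\mathcal{V}_{\mathcal{G}}(K,C)=\{y\in\mathbb{R}^3:({}^{\mathcal{G}}y)^Ta_i\ge0\ \forall i\}$. For $\delta,\epsilon\ge0$, $\mathcal{P}(\delta,\epsilon)$ is the set of frames $\mathcal{F}$ with $\|{}^{\mathcal{F}}t_{\hat{\mathcal{C}}}\|_2\le\delta$ and such that the rotation vector $\theta u$ of ${}^{\mathcal{F}}R_{\hat{\mathcal{C}}}$ satisfies $\|\theta u\|_2\le\epsilon$; thus $\mathcal{P}(\delta,0)$ consists of frames with the same orientation as $\hat{\mathcal{C}}$ whose origin is within distance $\delta$ of that of $\hat{\mathcal{C}}$. *)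

theory Defs
  imports "HOL-Analysis.Analysis"
begin

(* A reference frame, given by its pose w.r.t. a fixed world frame:
   (R, o) where the columns of R are the basis vectors of the frame and
   o is its origin, both expressed in world coordinates. *)
type_synonym frame = "(real^3^3) \<times> (real^3)"

definition is_frame :: "frame \<Rightarrow> bool" where
  "is_frame F \<longleftrightarrow> orthogonal_matrix (fst F) \<and> det (fst F) = 1"

definition coords :: "frame \<Rightarrow> real^3 \<Rightarrow> real^3" where
  "coords F y = transpose (fst F) *v (y - snd F)"

definition relR :: "frame \<Rightarrow> frame \<Rightarrow> real^3^3" where
  "relR F G = transpose (fst F) ** fst G"

definition relt :: "frame \<Rightarrow> frame \<Rightarrow> real^3" where
  "relt F G = transpose (fst F) *v (snd G - snd F)"

(* norm of the rotation vector theta*u of a rotation matrix R, theta in [0, pi] *)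
definition rot_angle :: "real^3^3 \<Rightarrow> real" where
  "rot_angle R = arccos ((trace R - 1) / 2)"

definition upper_triangular3 :: "real^3^3 \<Rightarrow> bool" where
  "upper_triangular3 K \<longleftrightarrow> K$2$1 = 0 \<and> K$3$1 = 0 \<and> K$3$2 = 0"

(* corner matrix C in R^{2x4}; c_i is its i-th column, i = 0..3 *)
definition corner :: "real^4^2 \<Rightarrow> nat \<Rightarrow> real^2" where
  "corner C i = (\<chi> j. C $ j $ (of_nat i :: 4))"

definition dvec :: "real^3^3 \<Rightarrow> real^4^2 \<Rightarrow> nat \<Rightarrow> real^3" where
  "dvec K C i = matrix_inv K *v vector [corner C i $ 1, corner C i $ 2, 1]"

definition lvec :: "real^3^3 \<Rightarrow> real^4^2 \<Rightarrow> nat \<Rightarrow> real^3" where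
  "lvec K C i = (sgn (dvec K C i $ 3) / norm (dvec K C i)) *\<^sub>R dvec K C i"

definition avec :: "real^3^3 \<Rightarrow> real^4^2 \<Rightarrow> nat \<Rightarrow> real^3" where
  "avec K C i =
     - ((1 / norm (cross3 (lvec K C i) (lvec K C ((i + 1) mod 4))))
         *\<^sub>R cross3 (lvec K C i) (lvec K C ((i + 1) mod 4)))"

definition FOV :: "frame \<Rightarrow> real^3^3 \<Rightarrow> real^4^2 \<Rightarrow> (real^3) set" where
  "FOV G K C = {y. \<forall>i<4. coords G y \<bullet> avec K C i \<ge> 0}"

definition Pset :: "frame \<Rightarrow> real \<Rightarrow> real \<Rightarrow> frame set" where
  "Pset Chat \<delta> \<epsilon> = {F. is_frame F \<and> norm (relt F Chat) \<le> \<delta>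
                          \<and> rot_angle (relR F Chat) \<le> \<epsilon>}"

end

theory Submission
  imports Defs
begin

lemma rot_entries:
  fixes R :: "real^3^3"
  assumes "rotation_matrix R"
  shows "R$1$1 = R$2$2 * R$3$3 - R$3$2 * R$2$3"
    "R$2$2 = R$3$3 * R$1$1 - R$1$3 * R$3$1"
    "R$3$3 = R$1$1 * R$2$2 - R$2$1 * R$1$2"
    "(R$1$1)^2 + (R$2$1)^2 + (R$3$1)^2 = 1"
    "(R$1$2)^2 + (R$2$2)^2 + (R$3$2)^2 = 1"
    "(R$1$3)^2 + (R$2$3)^2 + (R$3$3)^2 = 1"
    "(R$1$1)^2 + (R$1$2)^2 + (R$1$3)^2 = 1"
    "(R$2$1)^2 + (R$2$2)^2 + (R$2$3)^2 = 1"
    "(R$3$1)^2 + (R$3$2)^2 + (R$3$3)^2 = 1"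
proof -
  have c: "cross3 (R *v x) (R *v y) = R *v (cross3 x y)" for x y
    using cross_rotation_matrix[OF assms] .
  have o1: "transpose R ** R = mat 1" and o2: "R ** transpose R = mat 1"
    using assms unfolding rotation_matrix_def orthogonal_matrix_def by auto
  have a1: "cross3 (axis 2 1) (axis 3 1) = (axis 1 1 :: real^3)"
    and a2: "cross3 (axis 3 1) (axis 1 1) = (axis 2 1 :: real^3)"
    and a3: "cross3 (axis 1 1) (axis 2 1) = (axis 3 1 :: real^3)"
    by (simp_all add: cross3_simps axis_def)
  have e1: "cross3 (R *v axis 2 1) (R *v axis 3 1) = R *v axis 1 1" using c a1 by metis
  have e2: "cross3 (R *v axis 3 1) (R *v axis 1 1) = R *v axis 2 1" using c a2 by metis
  have e3: "cross3 (R *v axis 1 1) (R *v axis 2 1) = R *v axis 3 1" using c a3 by metis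
  show "R$1$1 = R$2$2 * R$3$3 - R$3$2 * R$2$3"
    using arg_cong[OF e1, of "\<lambda>v. v$1"]
    by (simp add: cross3_def matrix_vector_mult_def sum_3 axis_def)
  show "R$2$2 = R$3$3 * R$1$1 - R$1$3 * R$3$1"
    using arg_cong[OF e2, of "\<lambda>v. v$2"]
    by (simp add: cross3_def matrix_vector_mult_def sum_3 axis_def)
  show "R$3$3 = R$1$1 * R$2$2 - R$2$1 * R$1$2"
    using arg_cong[OF e3, of "\<lambda>v. v$3"]
    by (simp add: cross3_def matrix_vector_mult_def sum_3 axis_def)
  show "(R$1$1)^2 + (R$2$1)^2 + (R$3$1)^2 = 1"
    using arg_cong[OF o1, of "\<lambda>M. M$1$1"]
    by (simp add: matrix_matrix_mult_def sum_3 transpose_def mat_def power2_eq_square)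
  show "(R$1$2)^2 + (R$2$2)^2 + (R$3$2)^2 = 1"
    using arg_cong[OF o1, of "\<lambda>M. M$2$2"]
    by (simp add: matrix_matrix_mult_def sum_3 transpose_def mat_def power2_eq_square)
  show "(R$1$3)^2 + (R$2$3)^2 + (R$3$3)^2 = 1"
    using arg_cong[OF o1, of "\<lambda>M. M$3$3"]
    by (simp add: matrix_matrix_mult_def sum_3 transpose_def mat_def power2_eq_square)
  show "(R$1$1)^2 + (R$1$2)^2 + (R$1$3)^2 = 1"
    using arg_cong[OF o2, of "\<lambda>M. M$1$1"]
    by (simp add: matrix_matrix_mult_def sum_3 transpose_def mat_def power2_eq_square)
  show "(R$2$1)^2 + (R$2$2)^2 + (R$2$3)^2 = 1"
    using arg_cong[OF o2, of "\<lambda>M. M$2$2"]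
    by (simp add: matrix_matrix_mult_def sum_3 transpose_def mat_def power2_eq_square)
  show "(R$3$1)^2 + (R$3$2)^2 + (R$3$3)^2 = 1"
    using arg_cong[OF o2, of "\<lambda>M. M$3$3"]
    by (simp add: matrix_matrix_mult_def sum_3 transpose_def mat_def power2_eq_square)
qed

lemma alg_id:
  fixes a e k h f p q :: real
  assumes "a = e*k - h*f" "a^2 + p + q = 1" "p + e^2 + f^2 = 1" "q + h^2 + k^2 = 1"
  shows "(1+a+e+k)*(1+a-e-k) = (h-f)^2"
proof -
  have l: "(1+a+e+k)*(1+a-e-k) = 1 + 2*a + a^2 - e^2 - k^2 - 2*(e*k)"
    by (simp add: power2_eq_square algebra_simps)
  have r: "(h-f)^2 = h^2 + f^2 - 2*(h*f)"
    by (simp add: power2_eq_square algebra_simps)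
  have hf: "h*f = e*k - a" using assms(1) by simp
  have r': "(h-f)^2 = h^2 + f^2 - 2*(e*k) + 2*a" unfolding r hf by simp
  show ?thesis unfolding l r' using assms(2-4) by linarith
qed

lemma alg_sign:
  fixes a e k h f p q :: real
  assumes "a = e*k - h*f" "a^2 + p + q = 1" "p + e^2 + f^2 = 1" "q + h^2 + k^2 = 1"
    and "1+a+e+k < 0"
  shows "1+a-e-k \<le> 0"
proof (rule ccontr)
  assume "\<not> ?thesis"
  hence "(1+a+e+k)*(1+a-e-k) < 0" using assms(5) by (simp add: mult_neg_pos)
  thus False using alg_id[OF assms(1-4)] by simp
qed

lemma trace_rot:
  fixes R :: "real^3^3"
  assumes "rotation_matrix R"
  shows "trace R \<ge> -1"
proof (rule ccontr)
  note e = rot_entries[OF assms]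
  assume "\<not> ?thesis"
  hence n: "1 + R$1$1 + R$2$2 + R$3$3 < 0" by (simp add: trace_def sum_3)
  have "1 + R$1$1 - R$2$2 - R$3$3 \<le> 0"
    by (rule alg_sign[of "R$1$1" "R$2$2" "R$3$3" "R$3$2" "R$2$3" "(R$2$1)^2" "(R$3$1)^2"]; use e n in linarith)
  moreover have "1 + R$2$2 - R$3$3 - R$1$1 \<le> 0"
    by (rule alg_sign[of "R$2$2" "R$3$3" "R$1$1" "R$1$3" "R$3$1" "(R$3$2)^2" "(R$1$2)^2"]; use e n in linarith)
  moreover have "1 + R$3$3 - R$1$1 - R$2$2 \<le> 0"
    by (rule alg_sign[of "R$3$3" "R$1$1" "R$2$2" "R$2$1" "R$1$2" "(R$1$3)^2" "(R$2$3)^2"]; use e n in linarith)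
  ultimately show False using n by linarith
qed

lemma rot_id:
  fixes R :: "real^3^3"
  assumes "rotation_matrix R" "rot_angle R \<le> 0"
  shows "R = mat 1"
proof -
  note e = rot_entries[OF assms(1)]
  have d1: "R$1$1 \<le> 1" "R$2$2 \<le> 1" "R$3$3 \<le> 1"
  proof -
    have "(R$1$1)^2 \<le> 1" "(R$2$2)^2 \<le> 1" "(R$3$3)^2 \<le> 1"
      using e(4-6) zero_le_power2[of "R$2$1"] zero_le_power2[of "R$3$1"]
        zero_le_power2[of "R$1$2"] zero_le_power2[of "R$3$2"]
        zero_le_power2[of "R$1$3"] zero_le_power2[of "R$2$3"] by linarith+
    thus "R$1$1 \<le> 1" "R$2$2 \<le> 1" "R$3$3 \<le> 1" by (simp_all add: abs_square_le_1)
  qed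
  have tr: "trace R = R$1$1 + R$2$2 + R$3$3" by (simp add: trace_def sum_3)
  define v where "v = (trace R - 1) / 2"
  have v1: "-1 \<le> v" using trace_rot[OF assms(1)] by (simp add: v_def)
  have v2: "v \<le> 1" using d1 tr by (simp add: v_def)
  have "arccos v = 0" using arccos_lbound[OF v1 v2] assms(2) by (simp add: rot_angle_def v_def)
  hence "v = 1" using cos_arccos[OF v1 v2] by simp
  hence "trace R = 3" by (simp add: v_def)
  hence d: "R$1$1 = 1" "R$2$2 = 1" "R$3$3 = 1" using d1 tr by linarith+
  have z: "R$2$1 = 0" "R$3$1 = 0" "R$1$2 = 0" "R$3$2 = 0" "R$1$3 = 0" "R$2$3 = 0"
  proof -
    have "(R$2$1)^2 = 0 \<and> (R$3$1)^2 = 0 \<and> (R$1$2)^2 = 0 \<and> (R$3$2)^2 = 0 \<and> (R$1$3)^2 = 0 \<and> (R$2$3)^2 = 0"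
      using e(4-6) d zero_le_power2[of "R$2$1"] zero_le_power2[of "R$3$1"]
        zero_le_power2[of "R$1$2"] zero_le_power2[of "R$3$2"]
        zero_le_power2[of "R$1$3"] zero_le_power2[of "R$2$3"] by simp
    thus "R$2$1 = 0" "R$3$1 = 0" "R$1$2 = 0" "R$3$2 = 0" "R$1$3 = 0" "R$2$3 = 0" by simp_all
  qed
  show ?thesis
    by (simp add: vec_eq_iff forall_3 mat_def d z)
qed

lemma norm_avec_le: "norm (avec K C i) \<le> 1"
proof -
  let ?c = "cross3 (lvec K C i) (lvec K C ((i + 1) mod 4))"
  show ?thesis
  proof (cases "?c = 0")
    case True thus ?thesis by (simp add: avec_def)
  next
    case False thus ?thesis by (simp add: avec_def)
  qed
qed

lemma rot_rel:
  assumes "is_frame F" "is_frame G"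
  shows "rotation_matrix (relR F G)"
  using assms unfolding is_frame_def relR_def rotation_matrix_def
  by (simp add: orthogonal_matrix_mul det_mul)

lemma relR_id:
  assumes "is_frame F" "relR F G = mat 1"
  shows "fst G = fst F"
proof -
  have "fst F ** transpose (fst F) = mat 1"
    using assms(1) unfolding is_frame_def orthogonal_matrix_def by simp
  hence "fst G = (fst F ** transpose (fst F)) ** fst G" by (simp add: matrix_mul_lid)
  also have "\<dots> = fst F ** relR F G" by (simp add: relR_def matrix_mul_assoc)
  also have "\<dots> = fst F" using assms(2) by (simp add: matrix_mul_rid)
  finally show ?thesis .
qed

theorem theorem1:
  fixes Chat Ctil :: frame and K :: "real^3^3" and C :: "real^4^2"
    and \<delta> ztil :: real
  assumes "is_frame Chat"
    and "invertible K" and "upper_triangular3 K"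
    and "\<forall>i<4. avec K C i $ 3 > 0"
    and "\<delta> \<ge> 0"
    and "is_frame Ctil"
    and "relR Chat Ctil = mat 1"
    and "relt Chat Ctil = vector [0, 0, ztil]"
    and "ztil \<ge> \<delta> / Min ((\<lambda>i. avec K C i $ 3) ` {0..<4})"
  shows "\<forall>F \<in> Pset Chat \<delta> 0. FOV Ctil K C \<subseteq> FOV F K C"
proof (intro ballI subsetI)
  fix F y
  assume F: "F \<in> Pset Chat \<delta> 0" and y: "y \<in> FOV Ctil K C"
  have fF: "is_frame F" and tF: "norm (relt F Chat) \<le> \<delta>" and aF: "rot_angle (relR F Chat) \<le> 0"
    using F by (auto simp: Pset_def)
  have QC: "fst Chat = fst F" using relR_id[OF fF rot_id[OF rot_rel[OF fF assms(1)] aF]] .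
  have QT: "fst Ctil = fst Chat" using relR_id[OF assms(1) assms(7)] .
  define m where "m = Min ((\<lambda>i. avec K C i $ 3) ` {0..<4})"
  have mmem: "m \<in> (\<lambda>i. avec K C i $ 3) ` {0..<4}" unfolding m_def by (intro Min_in) auto
  have mpos: "m > 0" using mmem assms(4) by auto
  have mle: "m \<le> avec K C i $ 3" if "i < 4" for i
    unfolding m_def using that by (intro Min_le) auto
  show "y \<in> FOV F K C"
    unfolding FOV_def
  proof (intro CollectI allI impI)
    fix i :: nat assume i: "i < 4"
    let ?a = "avec K C i"
    let ?Q = "transpose (fst F)"
    have dec: "coords F y = coords Ctil y + relt Chat Ctil + relt F Chat"
      unfolding coords_def relt_def QT QC
      by (simp add: matrix_vector_right_distrib[symmetric] algebra_simps)
    have w: "coords Ctil y \<bullet> ?a \<ge> 0" using y i by (simp add: FOV_def)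
    have zt: "relt Chat Ctil \<bullet> ?a = ztil * ?a $ 3"
      unfolding assms(8) by (simp add: inner_vec_def sum_3)
    have "\<bar>relt F Chat \<bullet> ?a\<bar> \<le> norm (relt F Chat) * norm ?a" by (rule Cauchy_Schwarz_ineq2)
    also have "\<dots> \<le> \<delta> * 1" using tF norm_avec_le assms(5) by (intro mult_mono) auto
    finally have t: "relt F Chat \<bullet> ?a \<ge> - \<delta>" by simp
    have "\<delta> / m * m \<le> ztil * ?a $ 3"
    proof -
      have "\<delta> / m \<le> ztil" using assms(9) by (simp add: m_def)
      moreover have "0 \<le> \<delta> / m" using assms(5) mpos by simp
      ultimately show ?thesis using mle[OF i] mpos by (intro mult_mono) auto
    qed
    hence "\<delta> \<le> ztil * ?a $ 3" using mpos by simp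
    thus "coords F y \<bullet> ?a \<ge> 0" unfolding dec inner_add_left zt using w t by linarith
  qed
qed

end
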